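(* In the abstract boundary problem setting with an invertible reference operator described in the context, the map $\Gamma_0\oplus\bm\Gamma_1:\mathcal D(T^* )\to K'\oplus K$ is surjective.
   Context: Inner products are linear in the first argument and conjugate-linear in the second. Let $H_0$ be a separable Hilbert space with inner product $\langle\cdot,\cdot\rangle$, let $T$ be a closed densely defined symmetric operator in $H_0$ with adjoint $T^*$, and equip $\mathcal D(T^* )$ with the graph norm. Let $H_1\subset H_0$ be a dense subspace which is a Hilbert space in its own right with bounded inclusion $H_1\to H_0$. Let $K^\partial$ be a separable Hilbert space with inner product $\langle\cdot,\cdot\rangle_\partial$ and $K\subset K^\partial$ a dense subspace which is a Hilbert space in its own right with bounded inclusion. Let $K'$ be the space of continuous anti-linear functionals on $K$ (a Hilbert space with the dual norm); $K^\partial$ is regarded as a dense subspace of $K'$ via $y\mapsto(x\mapsto\langle y,x\rangle_\partial)$, so $K\subset K^\partial\subset K'$. For $y\in K'$, $x\in K$ put $\langle y,x\rangle_{K',K}=y(x)$ and $\langle x,y\rangle_{K,K'}=\overline{y(x)}$; these agree with $\langle\cdot,\cdot\rangle_\partial$ when $y\in K^\partial$. Standing assumptions: $H_1\subset\mathcal D(T^* )$ and $H_1$ is dense in $\mathcal D(T^* )$ in the graph norm; $T^*|_{H_1}:H_1\to H_0$ is bounded; $\gamma_0,\gamma_1:H_1\to K$ are bounded linear operators such that $\gamma=\gamma_0\oplus\gamma_1:H_1\to K\oplus K$ is surjective; $\operatorname{Ker}\gamma$ is dense in $H_0$ and $\mathcal D(T)=\operatorname{Ker}\gamma$; and the Lagrange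 identity $\langle T^*u,v\rangle-\langle u,T^*v\rangle=\langle\gamma_1u,\gamma_0v\rangle_\partial-\langle\gamma_0u,\gamma_1v\rangle_\partial$ holds for all $u,v\in H_1$. $\Gamma_0,\Gamma_1:\mathcal D(T^* )\to K'$ denote the (existing, unique) continuous extensions of $\gamma_0,\gamma_1$; they satisfy $\langle T^*u,v\rangle-\langle u,T^*v\rangle=\langle\Gamma_1u,\Gamma_0v\rangle_{K',K}-\langle\Gamma_0u,\Gamma_1v\rangle_{K',K}$ for $u\in\mathcal D(T^* )$, $v\in H_1$. Moreover $A$ is a self-adjoint operator in $H_0$ with $T\subset A\subset T^*$, $\mathcal D(A)=\operatorname{Ker}\gamma_0$ (so $\mathcal D(A)\subset H_1$), and $A$ has a bounded everywhere defined inverse. Then $\mathcal D(T^* )=\mathcal D(A)\dotplus\operatorname{Ker}T^*$ topologically, with projections $p=A^{-1}T^*$ onto $\mathcal D(A)$ and $k=1-p$ onto $\operatorname{Ker}T^*$, and $\Gamma_0$ restricts to a topological isomorphism $\operatorname{Ker}T^*\to K'$; let $\bm\gamma(0):K'\to\operatorname{Ker}T^*$ be its inverse, $M(0)=\Gamma_1\circ\bm\gamma(0):K'\to K'$, and define the reduced boundary operator $\bm\Gamma_1=\Gamma_1-M(0)\circ\Gamma_0:\mathcal D(T^* )\to K'$; its image lies in $K$. *)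

theory Defs
  imports "HOL-Analysis.Analysis"
begin

class cvec = ab_group_add +
  fixes cscale :: "complex \<Rightarrow> 'a \<Rightarrow> 'a"
  assumes cscale_add_right: "cscale a (x + y) = cscale a x + cscale a y"
    and cscale_add_left: "cscale (a + b) x = cscale a x + cscale b x"
    and cscale_cscale: "cscale a (cscale b x) = cscale (a * b) x"
    and cscale_one: "cscale 1 x = x"

definition csubspace_on :: "'a::cvec set \<Rightarrow> bool" where
  "csubspace_on V \<longleftrightarrow> 0 \<in> V \<and> (\<forall>x\<in>V. \<forall>y\<in>V. x + y \<in> V) \<and> (\<forall>a. \<forall>x\<in>V. cscale a x \<in> V)"

definition clinear_on :: "'a::cvec set \<Rightarrow> ('a \<Rightarrow> 'b::cvec) \<Rightarrow> bool" where
  "clinear_on V f \<longleftrightarrow> (\<forall>x\<in>V. \<forall>y\<in>V. f (x + y) = f x + f y) \<and> (\<forall>a. \<forall>x\<in>V. f (cscale a x) = cscale a (f x))"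

definition inner_product_on :: "'a::cvec set \<Rightarrow> ('a \<Rightarrow> 'a \<Rightarrow> complex) \<Rightarrow> bool" where
  "inner_product_on V ip \<longleftrightarrow> csubspace_on V \<and>
     (\<forall>x\<in>V. \<forall>y\<in>V. \<forall>z\<in>V. ip (x + y) z = ip x z + ip y z) \<and>
     (\<forall>a. \<forall>x\<in>V. \<forall>y\<in>V. ip (cscale a x) y = a * ip x y) \<and>
     (\<forall>x\<in>V. \<forall>y\<in>V. ip y x = cnj (ip x y)) \<and>
     (\<forall>x\<in>V. 0 \<le> Re (ip x x)) \<and>
     (\<forall>x\<in>V. ip x x = 0 \<longrightarrow> x = 0)"

definition ipnorm :: "('a \<Rightarrow> 'a \<Rightarrow> complex) \<Rightarrow> 'a \<Rightarrow> real" where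
  "ipnorm ip x = sqrt (Re (ip x x))"

definition complete_on :: "'a::cvec set \<Rightarrow> ('a \<Rightarrow> real) \<Rightarrow> bool" where
  "complete_on V nrm \<longleftrightarrow> (\<forall>s. (\<forall>n. s n \<in> V) \<longrightarrow>
      (\<forall>e>0. \<exists>N. \<forall>m\<ge>N. \<forall>n\<ge>N. nrm (s m - s n) < e) \<longrightarrow>
      (\<exists>l\<in>V. (\<lambda>n. nrm (s n - l)) \<longlonglongrightarrow> 0))"

definition dense_wrt :: "('a::cvec \<Rightarrow> real) \<Rightarrow> 'a set \<Rightarrow> 'a set \<Rightarrow> bool" where
  "dense_wrt nrm S V \<longleftrightarrow> (\<forall>x\<in>V. \<forall>e>0. \<exists>s\<in>S. nrm (x - s) < e)"

definition separable_on :: "'a::cvec set \<Rightarrow> ('a \<Rightarrow> real) \<Rightarrow> bool" where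
  "separable_on V nrm \<longleftrightarrow> (\<exists>D. D \<subseteq> V \<and> countable D \<and> dense_wrt nrm D V)"

definition hilbert_on :: "'a::cvec set \<Rightarrow> ('a \<Rightarrow> 'a \<Rightarrow> complex) \<Rightarrow> bool" where
  "hilbert_on V ip \<longleftrightarrow> inner_product_on V ip \<and> complete_on V (ipnorm ip)"

definition adj_dom :: "('a \<Rightarrow> 'a \<Rightarrow> complex) \<Rightarrow> 'a set \<Rightarrow> ('a \<Rightarrow> 'a) \<Rightarrow> 'a set" where
  "adj_dom ip D T = {v. \<exists>w. \<forall>u\<in>D. ip (T u) v = ip u w}"

definition adj_op :: "('a \<Rightarrow> 'a \<Rightarrow> complex) \<Rightarrow> 'a set \<Rightarrow> ('a \<Rightarrow> 'a) \<Rightarrow> 'a \<Rightarrow> 'a" where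
  "adj_op ip D T v = (THE w. \<forall>u\<in>D. ip (T u) v = ip u w)"

definition closed_op :: "('a::cvec \<Rightarrow> real) \<Rightarrow> 'a set \<Rightarrow> ('a \<Rightarrow> 'a) \<Rightarrow> bool" where
  "closed_op nrm D T \<longleftrightarrow> (\<forall>s u w. (\<forall>n. s n \<in> D) \<longrightarrow> (\<lambda>n. nrm (s n - u)) \<longlonglongrightarrow> 0 \<longrightarrow>
      (\<lambda>n. nrm (T (s n) - w)) \<longlonglongrightarrow> 0 \<longrightarrow> u \<in> D \<and> T u = w)"

definition symmetric_op :: "('a \<Rightarrow> 'a \<Rightarrow> complex) \<Rightarrow> 'a set \<Rightarrow> ('a \<Rightarrow> 'a) \<Rightarrow> bool" where
  "symmetric_op ip D T \<longleftrightarrow> (\<forall>u\<in>D. \<forall>v\<in>D. ip (T u) v = ip u (T v))"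

definition selfadjoint_op :: "('a::cvec \<Rightarrow> 'a \<Rightarrow> complex) \<Rightarrow> 'a set \<Rightarrow> ('a \<Rightarrow> 'a) \<Rightarrow> bool" where
  "selfadjoint_op ip D A \<longleftrightarrow> csubspace_on D \<and> clinear_on D A \<and> dense_wrt (ipnorm ip) D UNIV \<and>
     adj_dom ip D A = D \<and> (\<forall>v\<in>D. adj_op ip D A v = A v)"

definition graph_norm :: "('a \<Rightarrow> 'a \<Rightarrow> complex) \<Rightarrow> ('a \<Rightarrow> 'a) \<Rightarrow> 'a \<Rightarrow> real" where
  "graph_norm ip T u = sqrt ((ipnorm ip u)\<^sup>2 + (ipnorm ip (T u))\<^sup>2)"

section \<open>The antidual K' of K, realised as functions 'k => complex vanishing off K\<close>

definition antidual :: "'k::cvec set \<Rightarrow> ('k \<Rightarrow> real) \<Rightarrow> ('k \<Rightarrow> complex) set" where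
  "antidual K nK = {f. (\<forall>x\<in>K. \<forall>y\<in>K. f (x + y) = f x + f y) \<and>
      (\<forall>a. \<forall>x\<in>K. f (cscale a x) = cnj a * f x) \<and>
      (\<exists>C. \<forall>x\<in>K. cmod (f x) \<le> C * nK x) \<and>
      (\<forall>x. x \<notin> K \<longrightarrow> f x = 0)}"

definition emb_dual :: "'k set \<Rightarrow> ('k \<Rightarrow> 'k \<Rightarrow> complex) \<Rightarrow> 'k \<Rightarrow> ('k \<Rightarrow> complex)" where
  "emb_dual K ipd y = (\<lambda>x. if x \<in> K then ipd y x else 0)"

definition gamma_zero :: "'a::cvec set \<Rightarrow> ('a \<Rightarrow> 'a) \<Rightarrow> ('a \<Rightarrow> 'k \<Rightarrow> complex) \<Rightarrow> ('k \<Rightarrow> complex) \<Rightarrow> 'a" where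
  "gamma_zero Ds Ts G0 = inv_into {u\<in>Ds. Ts u = 0} G0"

definition weyl_zero :: "'a::cvec set \<Rightarrow> ('a \<Rightarrow> 'a) \<Rightarrow> ('a \<Rightarrow> 'k \<Rightarrow> complex) \<Rightarrow> ('a \<Rightarrow> 'k \<Rightarrow> complex) \<Rightarrow> ('k \<Rightarrow> complex) \<Rightarrow> ('k \<Rightarrow> complex)" where
  "weyl_zero Ds Ts G0 G1 phi = G1 (gamma_zero Ds Ts G0 phi)"

definition reduced_Gamma1 :: "'a::cvec set \<Rightarrow> ('a \<Rightarrow> 'a) \<Rightarrow> ('a \<Rightarrow> 'k \<Rightarrow> complex) \<Rightarrow> ('a \<Rightarrow> 'k \<Rightarrow> complex) \<Rightarrow> 'a \<Rightarrow> ('k \<Rightarrow> complex)" where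
  "reduced_Gamma1 Ds Ts G0 G1 u = (\<lambda>x. G1 u x - weyl_zero Ds Ts G0 G1 (G0 u) x)"

end

theory Submission
  imports Defs
begin



lemma cscale_zero_right[simp]: "cscale a (0::'a::cvec) = 0"
proof -
  have "cscale a 0 + cscale a 0 = cscale a (0::'a) + 0" by (simp flip: cscale_add_right)
  then show ?thesis by (rule add_left_imp_eq)
qed
lemma cscale_zero_left[simp]: "cscale 0 (x::'a::cvec) = 0"
proof -
  have "cscale 0 x + cscale 0 x = cscale 0 x + 0" by (simp flip: cscale_add_left)
  then show ?thesis by (rule add_left_imp_eq)
qed
lemma cscale_minus_right: "cscale a (- (x::'a::cvec)) = - cscale a x"
proof -
  have "cscale a (- x) + cscale a x = 0" by (simp flip: cscale_add_right)
  then show ?thesis by (simp add: eq_neg_iff_add_eq_0)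
qed
lemma cscale_diff_right: "cscale a ((x::'a::cvec) - y) = cscale a x - cscale a y"
  by (simp only: diff_conv_add_uminus cscale_add_right cscale_minus_right)
lemma cscale_minus_left: "cscale (- a) (x::'a::cvec) = - cscale a x"
proof -
  have "cscale (- a) x + cscale a x = 0" by (simp flip: cscale_add_left)
  then show ?thesis by (simp add: eq_neg_iff_add_eq_0)
qed
lemma cscale_diff_left: "cscale (a - b) (x::'a::cvec) = cscale a x - cscale b x"
  by (simp only: diff_conv_add_uminus cscale_add_left cscale_minus_left)
lemma cscale_m1: "cscale (-1) (x::'a::cvec) = - x"
  by (simp only: cscale_minus_left cscale_one)

lemma csub_0: "csubspace_on V \<Longrightarrow> 0 \<in> V" by (simp add: csubspace_on_def)
lemma csub_add: "csubspace_on V \<Longrightarrow> x \<in> V \<Longrightarrow> y \<in> V \<Longrightarrow> x + y \<in> V" by (simp add: csubspace_on_def)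
lemma csub_scale: "csubspace_on V \<Longrightarrow> x \<in> V \<Longrightarrow> cscale a x \<in> V" by (simp add: csubspace_on_def)
lemma csub_uminus: "csubspace_on V \<Longrightarrow> x \<in> V \<Longrightarrow> - x \<in> V"
  using csub_scale[of V x "-1"] by (simp add: cscale_m1)
lemma csub_diff: "csubspace_on V \<Longrightarrow> x \<in> V \<Longrightarrow> y \<in> V \<Longrightarrow> x - y \<in> V"
  using csub_add[of V x "-y"] csub_uminus[of V y] by simp

lemma clin_add: "clinear_on V f \<Longrightarrow> x \<in> V \<Longrightarrow> y \<in> V \<Longrightarrow> f (x + y) = f x + f y" by (simp add: clinear_on_def)
lemma clin_scale: "clinear_on V f \<Longrightarrow> x \<in> V \<Longrightarrow> f (cscale a x) = cscale a (f x)" by (simp add: clinear_on_def)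
lemma clin_0: "csubspace_on V \<Longrightarrow> clinear_on V f \<Longrightarrow> f 0 = 0"
  using clin_scale[of V f 0 0] csub_0[of V] by simp
lemma clin_uminus: "csubspace_on V \<Longrightarrow> clinear_on V f \<Longrightarrow> x \<in> V \<Longrightarrow> f (- x) = - f x"
  using clin_scale[of V f x "-1"] by (simp add: cscale_m1)
lemma clin_diff: "csubspace_on V \<Longrightarrow> clinear_on V f \<Longrightarrow> x \<in> V \<Longrightarrow> y \<in> V \<Longrightarrow> f (x - y) = f x - f y"
  using clin_add[of V f x "-y"] clin_uminus[of V f y] csub_uminus[of V y] by simp

locale ipspace =
  fixes V :: "'a::cvec set" and ip :: "'a \<Rightarrow> 'a \<Rightarrow> complex"
  assumes ipo: "inner_product_on V ip"
begin

lemma ipo': "csubspace_on V \<and>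
     (\<forall>x\<in>V. \<forall>y\<in>V. \<forall>z\<in>V. ip (x + y) z = ip x z + ip y z) \<and>
     (\<forall>a. \<forall>x\<in>V. \<forall>y\<in>V. ip (cscale a x) y = a * ip x y) \<and>
     (\<forall>x\<in>V. \<forall>y\<in>V. ip y x = cnj (ip x y)) \<and>
     (\<forall>x\<in>V. 0 \<le> Re (ip x x)) \<and>
     (\<forall>x\<in>V. ip x x = 0 \<longrightarrow> x = 0)" using ipo unfolding inner_product_on_def .
lemma sub: "csubspace_on V" using ipo' by (rule conjunct1)
lemma add_l: "x \<in> V \<Longrightarrow> y \<in> V \<Longrightarrow> z \<in> V \<Longrightarrow> ip (x + y) z = ip x z + ip y z"
  using conjunct1[OF conjunct2[OF ipo']] by blast
lemma scale_l: "x \<in> V \<Longrightarrow> y \<in> V \<Longrightarrow> ip (cscale a x) y = a * ip x y"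
  using conjunct1[OF conjunct2[OF conjunct2[OF ipo']]] by blast
lemma sym: "x \<in> V \<Longrightarrow> y \<in> V \<Longrightarrow> ip y x = cnj (ip x y)"
  using conjunct1[OF conjunct2[OF conjunct2[OF conjunct2[OF ipo']]]] by blast
lemma pos: "x \<in> V \<Longrightarrow> 0 \<le> Re (ip x x)"
  using conjunct1[OF conjunct2[OF conjunct2[OF conjunct2[OF conjunct2[OF ipo']]]]] by blast
lemma def0: "x \<in> V \<Longrightarrow> ip x x = 0 \<Longrightarrow> x = 0"
  using conjunct2[OF conjunct2[OF conjunct2[OF conjunct2[OF conjunct2[OF ipo']]]]] by blast
lemma add_r: "x \<in> V \<Longrightarrow> y \<in> V \<Longrightarrow> z \<in> V \<Longrightarrow> ip x (y + z) = ip x y + ip x z"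
proof -
  assume a: "x \<in> V" "y \<in> V" "z \<in> V"
  then have yz: "y + z \<in> V" using sub csub_add by blast
  have "ip x (y + z) = cnj (ip (y+z) x)" using sym[OF yz a(1)] .
  also have "ip (y+z) x = ip y x + ip z x" using a add_l by blast
  finally show ?thesis using sym[OF a(2) a(1)] sym[OF a(3) a(1)] by simp
qed
lemma scale_r: "x \<in> V \<Longrightarrow> y \<in> V \<Longrightarrow> ip x (cscale a y) = cnj a * ip x y"
proof -
  assume a: "x \<in> V" "y \<in> V"
  then have ay: "cscale a y \<in> V" using sub csub_scale by blast
  have "ip x (cscale a y) = cnj (ip (cscale a y) x)" using sym[OF ay a(1)] .
  also have "ip (cscale a y) x = a * ip y x" using a scale_l by blast
  finally show ?thesis using sym[OF a(2) a(1)] by simp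
qed
lemma zero_l[simp]: "y \<in> V \<Longrightarrow> ip 0 y = 0"
  using scale_l[of 0 y 0] csub_0[OF sub] by simp
lemma zero_r[simp]: "y \<in> V \<Longrightarrow> ip y 0 = 0"
  using scale_r[of y 0 0] csub_0[OF sub] by simp
lemma minus_l: "x \<in> V \<Longrightarrow> y \<in> V \<Longrightarrow> ip (- x) y = - ip x y"
  using scale_l[of x y "-1"] by (simp add: cscale_m1)
lemma minus_r: "x \<in> V \<Longrightarrow> y \<in> V \<Longrightarrow> ip x (- y) = - ip x y"
  using scale_r[of x y "-1"] by (simp add: cscale_m1)
lemma diff_l: "x \<in> V \<Longrightarrow> y \<in> V \<Longrightarrow> z \<in> V \<Longrightarrow> ip (x - y) z = ip x z - ip y z"
  using add_l[of x "-y" z] minus_l[of y z] csub_uminus[OF sub, of y] by simp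
lemma diff_r: "x \<in> V \<Longrightarrow> y \<in> V \<Longrightarrow> z \<in> V \<Longrightarrow> ip x (y - z) = ip x y - ip x z"
  using add_r[of x y "-z"] minus_r[of x z] csub_uminus[OF sub, of z] by simp
lemma self_real: assumes x: "x \<in> V" shows "ip x x = complex_of_real (Re (ip x x))"
proof -
  have h: "ip x x = cnj (ip x x)" using sym[OF x x] .
  have a: "Im (ip x x) = Im (cnj (ip x x))" using h by (rule arg_cong)
  have b: "Im (cnj (ip x x)) = - Im (ip x x)" by simp
  have "Im (ip x x) = 0" using a b by linarith
  then show ?thesis by (simp add: complex_eq_iff)
qed
lemma self_norm: assumes x: "x \<in> V" shows "ip x x = complex_of_real ((ipnorm ip x)\<^sup>2)"
  using self_real[OF x] pos[OF x] by (simp add: ipnorm_def)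
lemma norm_nonneg: "x \<in> V \<Longrightarrow> 0 \<le> ipnorm ip x" using pos by (simp add: ipnorm_def)
lemma norm_zero[simp]: "ipnorm ip 0 = 0"
  using sub csub_0 by (fastforce simp: ipnorm_def)
lemma norm_eq0: "x \<in> V \<Longrightarrow> ipnorm ip x = 0 \<longleftrightarrow> x = 0"
proof
  assume x: "x \<in> V" "ipnorm ip x = 0" then show "x = 0" using self_norm[OF x(1)] def0[OF x(1)] by simp
qed simp

lemma cs: assumes x: "x \<in> V" and y: "y \<in> V" shows "cmod (ip x y) \<le> ipnorm ip x * ipnorm ip y"
proof (cases "y = 0")
  case True then show ?thesis using x by simp
next
  case False
  define r where "r = (ipnorm ip y)\<^sup>2"
  have r: "r > 0" using False y norm_eq0[of y] norm_nonneg[OF y] unfolding r_def by simp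
  have q: "ip y y = of_real r" using self_norm y r_def by simp
  define p where "p = ip x y"
  define t where "t = p / of_real r"
  have yx: "ip y x = cnj p" unfolding p_def by (rule sym[OF x y])
  have ts: "cscale t y \<in> V" using sub y csub_scale by blast
  have "ip (x - cscale t y) (x - cscale t y) = ip x x - cnj t * p - t * cnj p + t * cnj t * of_real r"
    using x y ts sub by (simp add: diff_l diff_r scale_l scale_r q yx p_def csub_diff algebra_simps)
  also have "\<dots> = ip x x - of_real ((cmod p)\<^sup>2 / r)"
  proof -
    have pp: "p * cnj p = of_real ((cmod p)\<^sup>2)" by (rule complex_norm_square[symmetric])
    have rr: "(of_real r :: complex) \<noteq> 0" using r by simp
    have "cnj t * p = p * cnj p / of_real r" "t * cnj p = p * cnj p / of_real r"
      "t * cnj t * of_real r = p * cnj p / of_real r" unfolding t_def using rr by (simp_all add: field_simps)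
    then show ?thesis using pp by simp
  qed
  finally have e: "ip (x - cscale t y) (x - cscale t y) = ip x x - of_real ((cmod p)\<^sup>2 / r)" .
  have "0 \<le> Re (ip (x - cscale t y) (x - cscale t y))" using pos x ts sub csub_diff by blast
  then have "(cmod p)\<^sup>2 / r \<le> Re (ip x x)" using e by simp
  then have "(cmod p)\<^sup>2 \<le> (ipnorm ip x)\<^sup>2 * (ipnorm ip y)\<^sup>2"
    using r self_norm[OF x] unfolding r_def by (simp add: field_simps)
  then have "(cmod p)\<^sup>2 \<le> (ipnorm ip x * ipnorm ip y)\<^sup>2" by (simp add: power_mult_distrib)
  then show ?thesis unfolding p_def
    by (meson mult_nonneg_nonneg norm_nonneg[OF x] norm_nonneg[OF y] power2_le_imp_le)
qed

lemma norm_sq: "x \<in> V \<Longrightarrow> (ipnorm ip x)\<^sup>2 = Re (ip x x)"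
  using pos by (simp add: ipnorm_def)
lemma expand_add: assumes x: "x \<in> V" and y: "y \<in> V"
  shows "(ipnorm ip (x + y))\<^sup>2 = (ipnorm ip x)\<^sup>2 + (ipnorm ip y)\<^sup>2 + 2 * Re (ip x y)"
proof -
  have xy: "x + y \<in> V" using x y sub csub_add by blast
  have "ip (x+y) (x+y) = ip x x + ip x y + ip y x + ip y y"
    using x y xy by (simp add: add_l add_r)
  moreover have "ip y x = cnj (ip x y)" by (rule sym[OF x y])
  ultimately have "Re (ip (x+y) (x+y)) = Re (ip x x) + Re (ip y y) + 2 * Re (ip x y)" by simp
  then show ?thesis using norm_sq x y xy by simp
qed
lemma expand_diff: assumes x: "x \<in> V" and y: "y \<in> V"
  shows "(ipnorm ip (x - y))\<^sup>2 = (ipnorm ip x)\<^sup>2 + (ipnorm ip y)\<^sup>2 - 2 * Re (ip x y)"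
proof -
  have xy: "x - y \<in> V" using x y sub csub_diff by blast
  have "ip (x-y) (x-y) = ip x x - ip x y - ip y x + ip y y"
    using x y xy by (simp add: diff_l diff_r)
  moreover have "ip y x = cnj (ip x y)" by (rule sym[OF x y])
  ultimately have "Re (ip (x-y) (x-y)) = Re (ip x x) + Re (ip y y) - 2 * Re (ip x y)" by simp
  then show ?thesis using norm_sq x y xy by simp
qed
lemma triangle: assumes x: "x \<in> V" and y: "y \<in> V"
  shows "ipnorm ip (x + y) \<le> ipnorm ip x + ipnorm ip y"
proof -
  have "Re (ip x y) \<le> cmod (ip x y)" by (rule complex_Re_le_cmod)
  also have "\<dots> \<le> ipnorm ip x * ipnorm ip y" by (rule cs[OF x y])
  finally have "(ipnorm ip (x + y))\<^sup>2 \<le> (ipnorm ip x + ipnorm ip y)\<^sup>2"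
    using expand_add[OF x y] by (simp add: power2_eq_square algebra_simps)
  then show ?thesis using norm_nonneg x y
    by (meson add_nonneg_nonneg power2_le_imp_le)
qed
lemma norm_scale: assumes x: "x \<in> V" shows "ipnorm ip (cscale a x) = cmod a * ipnorm ip x"
proof -
  have ax: "cscale a x \<in> V" using x sub csub_scale by blast
  have "ip (cscale a x) (cscale a x) = a * cnj a * ip x x" using x ax by (simp add: scale_l scale_r)
  also have "a * cnj a = of_real ((cmod a)\<^sup>2)" by (rule complex_norm_square[symmetric])
  finally have "(ipnorm ip (cscale a x))\<^sup>2 = (cmod a)\<^sup>2 * (ipnorm ip x)\<^sup>2"
    using norm_sq[OF ax] self_norm[OF x] by simp
  then have "(ipnorm ip (cscale a x))\<^sup>2 = (cmod a * ipnorm ip x)\<^sup>2" by (simp add: power_mult_distrib)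
  then show ?thesis using norm_nonneg[OF ax] norm_nonneg[OF x]
    by (metis norm_ge_zero mult_nonneg_nonneg power2_eq_iff_nonneg)
qed
lemma norm_minus: assumes x: "x \<in> V" shows "ipnorm ip (- x) = ipnorm ip x"
  using norm_scale[OF x, of "-1"] by (simp add: cscale_m1)
lemma norm_commute: assumes x: "x \<in> V" and y: "y \<in> V" shows "ipnorm ip (x - y) = ipnorm ip (y - x)"
  using norm_minus[OF csub_diff[OF sub y x]] by simp
lemma triangle_diff: assumes x: "x \<in> V" and y: "y \<in> V" and z: "z \<in> V"
  shows "ipnorm ip (x - z) \<le> ipnorm ip (x - y) + ipnorm ip (y - z)"
  using triangle[OF csub_diff[OF sub x y] csub_diff[OF sub y z]] by simp
lemma rev_triangle: assumes x: "x \<in> V" and y: "y \<in> V"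
  shows "ipnorm ip x \<le> ipnorm ip (x - y) + ipnorm ip y"
  using triangle[OF csub_diff[OF sub x y] y] by simp
lemma parallelogram: assumes x: "x \<in> V" and y: "y \<in> V"
  shows "(ipnorm ip (x + y))\<^sup>2 + (ipnorm ip (x - y))\<^sup>2 = 2 * (ipnorm ip x)\<^sup>2 + 2 * (ipnorm ip y)\<^sup>2"
  using expand_add[OF x y] expand_diff[OF x y] by simp
end



lemma cscale_two: "cscale 2 (x::'a::cvec) = x + x"
  using cscale_add_left[of 1 1 x] by (simp add: cscale_one)

lemma lim_one_over: "(\<lambda>n. 1 / (real n + 1)) \<longlonglongrightarrow> 0"
  using LIMSEQ_inverse_real_of_nat by (simp add: divide_inverse add.commute)

lemma one_over_small: assumes "(e::real) > 0" shows "\<exists>N. \<forall>n\<ge>N. 1 / (real n + 1) < e"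
proof -
  obtain N where N: "N > 0" "inverse (real N) < e" using ex_inverse_of_nat_less[OF assms] by blast
  have "1 / (real n + 1) < e" if "n \<ge> N" for n
  proof -
    have "1 / (real n + 1) \<le> inverse (real N)" using N that by (simp add: divide_inverse le_imp_inverse_le)
    then show ?thesis using N by linarith
  qed
  then show ?thesis by blast
qed

locale hspace = ipspace "UNIV::'a::cvec set" ip for ip +
  assumes complete: "complete_on UNIV (ipnorm ip)"
begin

lemma riesz:
  fixes l :: "'a \<Rightarrow> complex"
  assumes ladd: "\<And>x y. l (x + y) = l x + l y"
    and lsc: "\<And>a x. l (cscale a x) = cnj a * l x"
    and lbd: "\<And>x. cmod (l x) \<le> C * ipnorm ip x"
  shows "\<exists>u. \<forall>f. l f = ip u f"
proof (cases "\<forall>f. l f = 0")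
  case True then show ?thesis by (intro exI[of _ 0]) simp
next
  case False
  then obtain f1 where f1: "l f1 \<noteq> 0" by blast
  have lminus: "l (- x) = - l x" for x using lsc[of "-1" x] by (simp add: cscale_m1)
  have ldiff: "l (x - y) = l x - l y" for x y using ladd[of x "-y"] lminus[of y] by simp
  define N where "N = {m. l m = 0}"
  define d where "d = Inf ((\<lambda>m. ipnorm ip (f1 - m)) ` N)"
  have N0: "0 \<in> N" unfolding N_def using lsc[of 0 0] by simp
  have bdd: "bdd_below ((\<lambda>m. ipnorm ip (f1 - m)) ` N)"
    by (rule bdd_belowI[of _ 0]) (auto simp: norm_nonneg)
  have dle: "d \<le> ipnorm ip (f1 - m)" if "m \<in> N" for m
    unfolding d_def using bdd that by (simp add: cInf_lower)
  have d0: "0 \<le> d" unfolding d_def using N0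
    by (intro cInf_greatest) (auto simp: norm_nonneg)
  have ex: "\<exists>m\<in>N. ipnorm ip (f1 - m) < d + 1 / (real n + 1)" for n
  proof -
    have "Inf ((\<lambda>m. ipnorm ip (f1 - m)) ` N) < d + 1 / (real n + 1)" unfolding d_def
      by (simp add: add_pos_pos)
    then show ?thesis using N0 bdd by (subst (asm) cInf_less_iff) auto
  qed
  then obtain ms where ms: "\<And>n. ms n \<in> N" "\<And>n. ipnorm ip (f1 - ms n) < d + 1 / (real n + 1)"
    by metis
  have Nadd: "x \<in> N \<Longrightarrow> y \<in> N \<Longrightarrow> x + y \<in> N" for x y unfolding N_def by (simp add: ladd)
  have Nsc: "x \<in> N \<Longrightarrow> cscale a x \<in> N" for a x unfolding N_def by (simp add: lsc)
  have Ndiff: "x \<in> N \<Longrightarrow> y \<in> N \<Longrightarrow> x - y \<in> N" for x y unfolding N_def by (simp add: ldiff)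
  have key: "(ipnorm ip (ms j - ms k))\<^sup>2 \<le> 2 * (d + 1/(real j+1))\<^sup>2 + 2 * (d + 1/(real k + 1))\<^sup>2 - 4 * d\<^sup>2" for j k
  proof -
    define x where "x = f1 - ms j"
    define y where "y = f1 - ms k"
    have par: "(ipnorm ip (x + y))\<^sup>2 + (ipnorm ip (x - y))\<^sup>2 = 2 * (ipnorm ip x)\<^sup>2 + 2 * (ipnorm ip y)\<^sup>2"
      by (rule parallelogram) auto
    have xy: "x - y = ms k - ms j" unfolding x_def y_def by simp
    have "x + y = cscale 2 (f1 - cscale (1/2) (ms j + ms k))"
      unfolding x_def y_def cscale_diff_right cscale_cscale cscale_two by (simp add: cscale_one)
    then have "ipnorm ip (x + y) = 2 * ipnorm ip (f1 - cscale (1/2) (ms j + ms k))"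
      by (simp add: norm_scale)
    moreover have "d \<le> ipnorm ip (f1 - cscale (1/2) (ms j + ms k))"
      by (rule dle) (intro Nsc Nadd ms)
    ultimately have "2 * d \<le> ipnorm ip (x + y)" by simp
    then have "(2 * d)\<^sup>2 \<le> (ipnorm ip (x + y))\<^sup>2" using d0 by (intro power_mono) auto
    then have A: "4 * d\<^sup>2 \<le> (ipnorm ip (x + y))\<^sup>2" by (simp add: power_mult_distrib)
    have B: "(ipnorm ip x)\<^sup>2 \<le> (d + 1/(real j+1))\<^sup>2" unfolding x_def
      using ms(2)[of j] by (intro power_mono) (auto simp: norm_nonneg)
    have C: "(ipnorm ip y)\<^sup>2 \<le> (d + 1/(real k+1))\<^sup>2" unfolding y_def
      using ms(2)[of k] by (intro power_mono) (auto simp: norm_nonneg)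
    have "ipnorm ip (ms j - ms k) = ipnorm ip (x - y)" unfolding xy by (rule norm_commute) auto
    then have E: "(ipnorm ip (ms j - ms k))\<^sup>2 = (ipnorm ip (x - y))\<^sup>2" by simp
    show ?thesis using par A B C E by linarith
  qed
  have cauchy: "\<forall>e>0. \<exists>M. \<forall>j\<ge>M. \<forall>k\<ge>M. ipnorm ip (ms j - ms k) < e"
  proof (intro allI impI)
    fix e :: real assume e: "e > 0"
    have "e\<^sup>2 / (8 * d + 4) > 0" using e d0 by simp
    then obtain M where M: "\<And>n. n \<ge> M \<Longrightarrow> 1 / (real n + 1) < min 1 (e\<^sup>2 / (8 * d + 4))"
      using one_over_small[of "min 1 (e\<^sup>2 / (8 * d + 4))"] by auto
    have "ipnorm ip (ms j - ms k) < e" if "j \<ge> M" "k \<ge> M" for j k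
    proof -
      define a where "a = 1 / (real j + 1)"
      define b where "b = 1 / (real k + 1)"
      have a: "0 \<le> a" "a \<le> 1" "a < e\<^sup>2 / (8 * d + 4)" using M[OF that(1)] unfolding a_def by auto
      have b: "0 \<le> b" "b \<le> 1" "b < e\<^sup>2 / (8 * d + 4)" using M[OF that(2)] unfolding b_def by auto
      have "(ipnorm ip (ms j - ms k))\<^sup>2 \<le> 2 * (d + a)\<^sup>2 + 2 * (d + b)\<^sup>2 - 4 * d\<^sup>2"
        using key[of j k] unfolding a_def b_def .
      also have "\<dots> = (4 * d + 2 * a) * a + (4 * d + 2 * b) * b" by (simp add: power2_eq_square algebra_simps)
      also have "\<dots> \<le> (4 * d + 2) * a + (4 * d + 2) * b" using a b d0 by (intro add_mono mult_right_mono) auto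
      also have "\<dots> < (4 * d + 2) * (e\<^sup>2 / (8 * d + 4)) + (4 * d + 2) * (e\<^sup>2 / (8 * d + 4))"
        using a b d0 by (intro add_strict_mono mult_strict_left_mono) auto
      also have "\<dots> = (8 * d + 4) * (e\<^sup>2 / (8 * d + 4))" by (simp add: algebra_simps)
      also have "\<dots> = e\<^sup>2" using d0 by simp
      finally show ?thesis using e by (simp add: power2_less_imp_less less_imp_le)
    qed
    then show "\<exists>M. \<forall>j\<ge>M. \<forall>k\<ge>M. ipnorm ip (ms j - ms k) < e" by blast
  qed
  then obtain m0 where m0: "(\<lambda>n. ipnorm ip (ms n - m0)) \<longlonglongrightarrow> 0"
    using complete unfolding complete_on_def by blast
  have lm0: "l m0 = 0"
  proof -
    have "cmod (l m0) \<le> C * ipnorm ip (ms n - m0)" for n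
    proof -
      have "l m0 = - l (ms n - m0)" using ms(1)[of n] unfolding N_def by (simp add: ldiff)
      then have "cmod (l m0) = cmod (l (ms n - m0))" by simp
      then show ?thesis using lbd by simp
    qed
    moreover have "(\<lambda>n. C * ipnorm ip (ms n - m0)) \<longlonglongrightarrow> C * 0" by (intro tendsto_mult tendsto_const m0)
    ultimately have "cmod (l m0) \<le> 0" using LIMSEQ_le_const[of "\<lambda>n. C * ipnorm ip (ms n - m0)" 0 "cmod (l m0)"] by auto
    then show ?thesis by simp
  qed
  define e where "e = f1 - m0"
  have le: "l e = l f1" unfolding e_def using lm0 by (simp add: ldiff)
  have nel: "ipnorm ip e \<le> d"
  proof -
    have "ipnorm ip e \<le> d + 1 / (real n + 1) + ipnorm ip (ms n - m0)" for n
    proof -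
      have "ipnorm ip e \<le> ipnorm ip (f1 - ms n) + ipnorm ip (ms n - m0)"
        unfolding e_def by (rule triangle_diff) auto
      then show ?thesis using ms(2)[of n] by linarith
    qed
    moreover have "(\<lambda>n. d + 1 / (real n + 1) + ipnorm ip (ms n - m0)) \<longlonglongrightarrow> d + 0 + 0"
      by (intro tendsto_add tendsto_const m0 lim_one_over)
    ultimately show ?thesis using LIMSEQ_le_const[of _ d "ipnorm ip e"] by auto
  qed
  have orth: "ip e n = 0" if n: "n \<in> N" for n
  proof (rule ccontr)
    assume ne: "ip e n \<noteq> 0"
    define q where "q = ip e n"
    define r where "r = (ipnorm ip n)\<^sup>2"
    have r0: "0 \<le> r" unfolding r_def by simp
    define s :: real where "s = 1 / (r + 1)"
    have s0: "0 < s" unfolding s_def using r0 by simp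
    define t where "t = complex_of_real s * q"
    have "m0 + cscale t n \<in> N" unfolding N_def using lm0 n unfolding N_def by (simp add: ladd lsc)
    then have "d \<le> ipnorm ip (f1 - (m0 + cscale t n))" by (rule dle)
    also have "f1 - (m0 + cscale t n) = e - cscale t n" unfolding e_def by simp
    finally have "ipnorm ip e \<le> ipnorm ip (e - cscale t n)" using nel by linarith
    then have "(ipnorm ip e)\<^sup>2 \<le> (ipnorm ip (e - cscale t n))\<^sup>2" by (intro power_mono) (auto simp: norm_nonneg)
    also have "\<dots> = (ipnorm ip e)\<^sup>2 + (ipnorm ip (cscale t n))\<^sup>2 - 2 * Re (ip e (cscale t n))"
      by (rule expand_diff) auto
    also have "ip e (cscale t n) = complex_of_real (s * (cmod q)\<^sup>2)"
    proof -
      have "ip e (cscale t n) = cnj t * q" unfolding q_def by (simp add: scale_r)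
      also have "cnj t * q = of_real s * (q * cnj q)" unfolding t_def by (simp add: algebra_simps)
      also have "q * cnj q = of_real ((cmod q)\<^sup>2)" by (rule complex_norm_square[symmetric])
      finally show ?thesis by simp
    qed
    also have "(ipnorm ip (cscale t n))\<^sup>2 = s\<^sup>2 * (cmod q)\<^sup>2 * r"
      unfolding t_def r_def using s0 by (simp add: norm_scale power_mult_distrib norm_mult)
    finally have "0 \<le> s\<^sup>2 * (cmod q)\<^sup>2 * r - 2 * (s * (cmod q)\<^sup>2)" by simp
    then have "0 \<le> s * (cmod q)\<^sup>2 * (s * r - 2)" by (simp add: power2_eq_square algebra_simps)
    moreover have "s * (cmod q)\<^sup>2 > 0" using s0 ne unfolding q_def by simp
    ultimately have "0 \<le> s * r - 2" by (simp add: zero_le_mult_iff)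
    moreover have "s * r < 1" unfolding s_def using r0 by (simp add: field_simps)
    ultimately show False by linarith
  qed
  have lf: "l f = ip e f * l e / ip e e" for f
  proof -
    have ee: "ip e e \<noteq> 0" using le f1 def0[of e] lsc[of 0 0] by auto
    define a where "a = cnj (l f / l e)"
    have "f - cscale a e \<in> N" unfolding N_def a_def using le f1 by (simp add: ldiff lsc)
    then have "ip e (f - cscale a e) = 0" by (rule orth)
    then have "ip e f = cnj a * ip e e" by (simp add: diff_r scale_r)
    then have "ip e f = (l f / l e) * ip e e" unfolding a_def by simp
    then have "ip e f * l e / ip e e = (l f / l e) * l e * (ip e e / ip e e)" by simp
    also have "\<dots> = l f" using ee le f1 by simp
    finally show ?thesis by simp
  qed
  show ?thesis
  proof (intro exI[of _ "cscale (l e / ip e e) e"] allI)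
    fix f
    have "ip (cscale (l e / ip e e) e) f = (l e / ip e e) * ip e f" by (simp add: scale_l)
    also have "\<dots> = ip e f * l e / ip e e" by simp
    also have "\<dots> = l f" using lf[of f] by simp
    finally show "l f = ip (cscale (l e / ip e e) e) f" by simp
  qed
qed
end



context hspace begin

lemma metric: "Metric_space UNIV (\<lambda>x y. ipnorm ip (x - y))"
proof
  fix x y z :: 'a
  show "0 \<le> ipnorm ip (x - y)" by (simp add: norm_nonneg)
  show "ipnorm ip (x - y) = ipnorm ip (y - x)" by (rule norm_commute) auto
  show "(ipnorm ip (x - y) = 0) = (x = y)" using norm_eq0[of "x - y"] by simp
  show "ipnorm ip (x - z) \<le> ipnorm ip (x - y) + ipnorm ip (y - z)" by (rule triangle_diff) auto
qed

lemma lim_iff: "(\<lambda>n. ipnorm ip (s n - l)) \<longlonglongrightarrow> 0 \<longleftrightarrow> (\<forall>e>0. \<exists>N. \<forall>n\<ge>N. ipnorm ip (s n - l) < e)"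
  by (simp add: LIMSEQ_iff norm_nonneg)

lemma baire_ball:
  fixes S :: "nat \<Rightarrow> 'a set"
  assumes cover: "\<And>x. \<exists>n. x \<in> S n"
  shows "\<exists>n f0 r. r > 0 \<and> (\<forall>h. ipnorm ip (h - f0) < r \<longrightarrow> (\<forall>e>0. \<exists>a\<in>S n. ipnorm ip (h - a) < e))"
proof -
  interpret M: Metric_space "UNIV::'a set" "\<lambda>x y. ipnorm ip (x - y)" by (rule metric)
  have mc: "M.mcomplete"
    unfolding M.mcomplete_def M.MCauchy_def M.limit_metric_sequentially
    using complete unfolding complete_on_def lim_iff by auto
  define G where "G = range (\<lambda>n. M.mtopology closure_of S n)"
  have "\<exists>T\<in>G. M.mtopology interior_of T \<noteq> {}"
  proof (rule ccontr)
    assume "\<not> ?thesis"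
    then have "M.mtopology interior_of \<Union>G = {}"
      by (intro M.metric_Baire_category_alt mc) (auto simp: G_def)
    moreover have "\<Union>G = UNIV"
    proof -
      have "x \<in> \<Union>G" for x
      proof -
        obtain n where "x \<in> S n" using cover by blast
        then have "x \<in> M.mtopology closure_of S n" using closure_of_subset[of "S n" M.mtopology] by auto
        then show ?thesis unfolding G_def by blast
      qed
      then show ?thesis by blast
    qed
    ultimately show False using interior_of_topspace[of M.mtopology] by simp
  qed
  then obtain n f0 where "f0 \<in> M.mtopology interior_of (M.mtopology closure_of S n)"
    unfolding G_def by blast
  then obtain r where r: "r > 0" "M.mball f0 r \<subseteq> M.mtopology closure_of S n"
    unfolding M.metric_interior_of by blast
  have "\<forall>e>0. \<exists>a\<in>S n. ipnorm ip (h - a) < e" if h: "ipnorm ip (h - f0) < r" for h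
  proof -
    have "h \<in> M.mball f0 r" using h norm_commute[of h f0] by simp
    then have "h \<in> M.mtopology closure_of S n" using r by blast
    then show ?thesis unfolding M.metric_closure_of by auto
  qed
  then show ?thesis using r by blast
qed
end



context hspace begin

lemma closed_graph:
  fixes B :: "'a \<Rightarrow> 'k::cvec" and K :: "'k set" and ipK
  assumes Kip: "ipspace K ipK" and Kc: "complete_on K (ipnorm ipK)"
    and BK: "\<And>x. B x \<in> K" and Badd: "\<And>x y. B (x + y) = B x + B y"
    and Bsc: "\<And>a x. B (cscale a x) = cscale a (B x)"
    and Bcl: "\<And>s f z. z \<in> K \<Longrightarrow> (\<lambda>n. ipnorm ip (s n - f)) \<longlonglongrightarrow> 0 \<Longrightarrow>
                 (\<lambda>n. ipnorm ipK (B (s n) - z)) \<longlonglongrightarrow> 0 \<Longrightarrow> B f = z"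
  shows "\<exists>C. \<forall>f. ipnorm ipK (B f) \<le> C * ipnorm ip f"
proof -
  interpret KK: ipspace K ipK by (rule Kip)
  have B0: "B 0 = 0" using Bsc[of 0 0] by simp
  have Bminus: "B (- x) = - B x" for x using Bsc[of "-1" x] by (simp add: cscale_m1)
  have Bdiff: "B (x - y) = B x - B y" for x y using Badd[of x "-y"] Bminus[of y] by simp
  have nKnn: "0 \<le> ipnorm ipK (B x)" for x using KK.norm_nonneg[OF BK] .
  have Kdiff: "B x - B y \<in> K" for x y using csub_diff[OF KK.sub BK BK] .
  have Hdiff_le: "ipnorm ip (x - y) \<le> ipnorm ip x + ipnorm ip y" for x y
    using triangle[of x "-y"] norm_minus[of y] by simp
  define S where "S n = {a. ipnorm ipK (B a) \<le> real n}" for n :: nat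
  have cover: "\<exists>n. x \<in> S n" for x
    using real_nat_ceiling_ge[of "ipnorm ipK (B x)"] unfolding S_def by blast
  obtain n f0 r where r: "r > 0"
    and rb: "\<And>h e. ipnorm ip (h - f0) < r \<Longrightarrow> e > 0 \<Longrightarrow> \<exists>a\<in>S n. ipnorm ip (h - a) < e"
    using baire_ball[OF cover] by blast
  have L0: "\<exists>a. ipnorm ip (h - a) < e \<and> ipnorm ipK (B a) \<le> 2 * real n"
    if h: "ipnorm ip h < r" and e: "e > 0" for h e
  proof -
    obtain a1 where a1: "a1 \<in> S n" "ipnorm ip ((f0 + h) - a1) < e / 2"
      using rb[of "f0 + h" "e/2"] h e by auto
    obtain a2 where a2: "a2 \<in> S n" "ipnorm ip (f0 - a2) < e / 2"
      using rb[of f0 "e/2"] r e by auto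
    have "h - (a1 - a2) = ((f0 + h) - a1) - (f0 - a2)" by (simp add: algebra_simps)
    then have "ipnorm ip (h - (a1 - a2)) \<le> ipnorm ip ((f0 + h) - a1) + ipnorm ip (f0 - a2)"
      using Hdiff_le by metis
    moreover have "ipnorm ipK (B (a1 - a2)) \<le> ipnorm ipK (B a1) + ipnorm ipK (B a2)"
      unfolding Bdiff using KK.triangle[OF BK csub_uminus[OF KK.sub BK], of a1 a2] KK.norm_minus[OF BK, of a2]
      by simp
    ultimately show ?thesis using a1 a2 unfolding S_def by (intro exI[of _ "a1 - a2"]) auto
  qed
  define M' where "M' = 4 * real n / r"
  have M'0: "0 \<le> M'" unfolding M'_def using r by simp
  have L1: "\<exists>a. ipnorm ip (h - a) \<le> ipnorm ip h / 2 \<and> ipnorm ipK (B a) \<le> M' * ipnorm ip h" for h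
  proof (cases "h = 0")
    case True then show ?thesis using B0 by (intro exI[of _ 0]) simp
  next
    case False
    define c where "c = ipnorm ip h"
    have c: "c > 0" using False norm_eq0[of h] norm_nonneg[of h] unfolding c_def by simp
    define t where "t = r / (2 * c)"
    have t: "t > 0" unfolding t_def using r c by simp
    define h' where "h' = cscale (complex_of_real t) h"
    have "ipnorm ip h' = cmod (complex_of_real t) * c" unfolding h'_def c_def by (simp add: norm_scale)
    also have "\<dots> = t * c" using t by simp
    also have "\<dots> = r / 2" unfolding t_def using c by simp
    finally have nh': "ipnorm ip h' = r / 2" .
    obtain a' where a': "ipnorm ip (h' - a') < t * c / 2" "ipnorm ipK (B a') \<le> 2 * real n"
      using L0[of h' "t * c / 2"] nh' r t c by auto
    define a where "a = cscale (complex_of_real (1 / t)) a'"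
    have "h - a = cscale (complex_of_real (1 / t)) (h' - a')"
      unfolding a_def h'_def cscale_diff_right cscale_cscale using t by (simp add: cscale_one)
    then have "ipnorm ip (h - a) = (1 / t) * ipnorm ip (h' - a')" using t by (simp add: norm_scale norm_divide)
    also have "\<dots> \<le> (1 / t) * (t * c / 2)" using a' t by (intro mult_left_mono) auto
    also have "\<dots> = ipnorm ip h / 2" using t unfolding c_def by simp
    finally have 1: "ipnorm ip (h - a) \<le> ipnorm ip h / 2" .
    have "ipnorm ipK (B a) = (1 / t) * ipnorm ipK (B a')" unfolding a_def Bsc using t
      by (simp add: KK.norm_scale[OF BK] norm_divide)
    also have "\<dots> \<le> (1 / t) * (2 * real n)" using a' t by (intro mult_left_mono) auto
    also have "\<dots> = M' * ipnorm ip h" unfolding M'_def t_def c_def[symmetric] using c r by (simp add: field_simps)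
    finally show ?thesis using 1 by blast
  qed
  then obtain A where A: "\<And>h. ipnorm ip (h - A h) \<le> ipnorm ip h / 2"
    "\<And>h. ipnorm ipK (B (A h)) \<le> M' * ipnorm ip h" by metis
  show ?thesis
  proof (intro exI allI)
    fix f
    define c where "c = ipnorm ip f"
    have c0: "0 \<le> c" unfolding c_def by (simp add: norm_nonneg)
    define hs where "hs = rec_nat f (\<lambda>k x. x - A x)"
    have hs0: "hs 0 = f" and hsS: "\<And>k. hs (Suc k) = hs k - A (hs k)" unfolding hs_def by simp_all
    have hsb: "ipnorm ip (hs k) \<le> c * (1/2) ^ k" for k
    proof (induction k)
      case 0 then show ?case by (simp add: hs0 c_def)
    next
      case (Suc k)
      have "ipnorm ip (hs (Suc k)) \<le> ipnorm ip (hs k) / 2" unfolding hsS by (rule A(1))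
      then show ?case using Suc by simp
    qed
    define y where "y m = B (hs m)" for m
    have yK: "y m \<in> K" for m unfolding y_def by (rule BK)
    have Q: "ipnorm ipK (y m - y (m + j)) \<le> 2 * M' * c * ((1/2) ^ m - (1/2) ^ (m + j))" for m j
    proof (induction j)
      case 0 then show ?case using KK.norm_zero by simp
    next
      case (Suc j)
      have e: "y m - y (m + Suc j) = (y m - y (m + j)) + B (A (hs (m + j)))"
        unfolding y_def by (simp add: hsS Bdiff)
      have "ipnorm ipK (y m - y (m + Suc j)) \<le> ipnorm ipK (y m - y (m + j)) + ipnorm ipK (B (A (hs (m + j))))"
        unfolding e by (rule KK.triangle) (auto simp: y_def Kdiff BK)
      also have "\<dots> \<le> 2 * M' * c * ((1/2) ^ m - (1/2) ^ (m + j)) + M' * (c * (1/2) ^ (m + j))"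
        using Suc A(2)[of "hs (m + j)"] hsb[of "m + j"] M'0 by (meson add_mono mult_left_mono order_trans)
      also have "\<dots> = 2 * M' * c * ((1/2) ^ m - (1/2) ^ (m + Suc j))" by (simp add: algebra_simps)
      finally show ?case .
    qed
    have Q': "ipnorm ipK (y m - y (m + j)) \<le> 2 * M' * c * (1/2) ^ m" for m j
    proof -
      have "0 \<le> 2 * M' * c * (1/2) ^ (m + j)" using M'0 c0 by simp
      moreover have "2 * M' * c * ((1/2) ^ m - (1/2) ^ (m + j)) = 2 * M' * c * (1/2) ^ m - 2 * M' * c * (1/2) ^ (m + j)"
        by (rule right_diff_distrib)
      ultimately show ?thesis using Q[of m j] by linarith
    qed
    have ycauchy: "\<forall>e>0. \<exists>N. \<forall>m\<ge>N. \<forall>k\<ge>N. ipnorm ipK (y m - y k) < e"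
    proof (intro allI impI)
      fix e :: real assume e: "e > 0"
      have lim: "(\<lambda>m. 2 * M' * c * (1/2) ^ m) \<longlonglongrightarrow> 0"
        by (intro tendsto_mult_right_zero LIMSEQ_realpow_zero) auto
      then obtain N where N: "\<And>m. m \<ge> N \<Longrightarrow> 2 * M' * c * (1/2) ^ m < e"
        using e unfolding LIMSEQ_iff by (metis abs_less_iff diff_zero real_norm_def)
      have "ipnorm ipK (y m - y k) < e" if "m \<ge> N" "k \<ge> N" for m k
      proof (cases "m \<le> k")
        case True
        then obtain j where "k = m + j" using le_Suc_ex by blast
        then show ?thesis using Q'[of m j] N[OF that(1)] by simp
      next
        case False
        then obtain j where "m = k + j" using le_Suc_ex by (metis nat_le_linear)
        then have "ipnorm ipK (y k - y m) < e" using Q'[of k j] N[OF that(2)] by simp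
        then show ?thesis using KK.norm_commute[OF yK yK, of m k] by simp
      qed
      then show "\<exists>N. \<forall>m\<ge>N. \<forall>k\<ge>N. ipnorm ipK (y m - y k) < e" by blast
    qed
    then obtain w where w: "w \<in> K" "(\<lambda>m. ipnorm ipK (y m - w)) \<longlonglongrightarrow> 0"
      using Kc yK unfolding complete_on_def by blast
    have hs0lim: "(\<lambda>m. ipnorm ip (hs m - 0)) \<longlonglongrightarrow> 0"
    proof (rule Lim_null_comparison)
      show "\<forall>\<^sub>F m in sequentially. norm (ipnorm ip (hs m - 0)) \<le> c * (1/2) ^ m"
        using hsb by (simp add: norm_nonneg)
      show "(\<lambda>m. c * (1/2) ^ m) \<longlonglongrightarrow> 0"
        by (intro tendsto_mult_right_zero LIMSEQ_realpow_zero) auto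
    qed
    have "B 0 = w" by (rule Bcl[OF w(1) hs0lim]) (use w(2) in \<open>simp add: y_def\<close>)
    then have w0: "w = 0" using B0 by simp
    have "ipnorm ipK (B f) \<le> 2 * M' * c + ipnorm ipK (y j - w)" for j
    proof -
      have "ipnorm ipK (y 0) \<le> ipnorm ipK (y 0 - y j) + ipnorm ipK (y j)"
        by (rule KK.rev_triangle) (auto simp: yK)
      then show ?thesis using Q'[of 0 j] w0 by (simp add: y_def hs0)
    qed
    moreover have "(\<lambda>j. 2 * M' * c + ipnorm ipK (y j - w)) \<longlonglongrightarrow> 2 * M' * c + 0"
      by (intro tendsto_add tendsto_const w(2))
    ultimately have "ipnorm ipK (B f) \<le> 2 * M' * c + 0" using LIMSEQ_le_const by blast
    then show "ipnorm ipK (B f) \<le> 2 * M' * ipnorm ip f" unfolding c_def by simp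
  qed
qed
end



lemma graph_ge1: "ipnorm ip x \<le> graph_norm ip T x"
  unfolding graph_norm_def by (metis abs_ge_self le_add_same_cancel1 order_trans real_sqrt_abs real_sqrt_le_mono zero_le_power2)
lemma graph_ge2: "ipnorm ip (T x) \<le> graph_norm ip T x"
  unfolding graph_norm_def by (metis abs_ge_self le_add_same_cancel2 order_trans real_sqrt_abs real_sqrt_le_mono zero_le_power2)
lemma graph_nonneg: "0 \<le> graph_norm ip T x"
  unfolding graph_norm_def by simp

lemma small_le_zero: assumes "\<And>e. e > 0 \<Longrightarrow> (x::real) \<le> e * c" "0 \<le> c" shows "x \<le> 0"
proof (rule ccontr)
  assume "\<not> x \<le> 0"
  then have x: "x > 0" by simp
  define e where "e = x / (2 * (c + 1))"
  have e: "e > 0" unfolding e_def using x assms(2) by simp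
  have "0 \<le> c * x" using x assms(2) by simp
  then have "e * c < x" unfolding e_def using x assms(2) by (simp add: field_simps) (use \<open>0 \<le> c * x\<close> x in linarith)
  then show False using assms(1)[OF e] by simp
qed

theorem lemma4p9:
  fixes ip0 :: "'h::cvec \<Rightarrow> 'h \<Rightarrow> complex"
    and DT :: "'h set" and T :: "'h \<Rightarrow> 'h"
    and Ds :: "'h set" and Ts :: "'h \<Rightarrow> 'h"
    and H1 :: "'h set" and ip1 :: "'h \<Rightarrow> 'h \<Rightarrow> complex"
    and ipd :: "'k::cvec \<Rightarrow> 'k \<Rightarrow> complex"
    and K :: "'k set" and ipK :: "'k \<Rightarrow> 'k \<Rightarrow> complex"
    and g0 g1 :: "'h \<Rightarrow> 'k"
    and G0 G1 :: "'h \<Rightarrow> 'k \<Rightarrow> complex"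
    and DA :: "'h set" and A :: "'h \<Rightarrow> 'h"
  assumes H0_hilbert: "hilbert_on UNIV ip0" and H0_sep: "separable_on UNIV (ipnorm ip0)"
    and T_subspace: "csubspace_on DT" and T_linear: "clinear_on DT T"
    and T_closed: "closed_op (ipnorm ip0) DT T"
    and T_dense: "dense_wrt (ipnorm ip0) DT UNIV"
    and T_symm: "symmetric_op ip0 DT T"
    and Ts_dom: "Ds = adj_dom ip0 DT T"
    and Ts_op: "\<forall>v\<in>Ds. Ts v = adj_op ip0 DT T v"
    and H1_hilbert: "hilbert_on H1 ip1"
    and H1_incl: "\<exists>C. \<forall>u\<in>H1. ipnorm ip0 u \<le> C * ipnorm ip1 u"
    and H1_dense: "dense_wrt (ipnorm ip0) H1 UNIV"
    and Kd_hilbert: "hilbert_on UNIV ipd" and Kd_sep: "separable_on UNIV (ipnorm ipd)"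
    and K_hilbert: "hilbert_on K ipK"
    and K_incl: "\<exists>C. \<forall>x\<in>K. ipnorm ipd x \<le> C * ipnorm ipK x"
    and K_dense: "dense_wrt (ipnorm ipd) K UNIV"
    and H1_sub: "H1 \<subseteq> Ds"
    and H1_dense_graph: "dense_wrt (graph_norm ip0 Ts) H1 Ds"
    and Ts_bdd: "\<exists>C. \<forall>u\<in>H1. ipnorm ip0 (Ts u) \<le> C * ipnorm ip1 u"
    and g0_lin: "clinear_on H1 g0" and g0_range: "g0 ` H1 \<subseteq> K"
    and g0_bdd: "\<exists>C. \<forall>u\<in>H1. ipnorm ipK (g0 u) \<le> C * ipnorm ip1 u"
    and g1_lin: "clinear_on H1 g1" and g1_range: "g1 ` H1 \<subseteq> K"
    and g1_bdd: "\<exists>C. \<forall>u\<in>H1. ipnorm ipK (g1 u) \<le> C * ipnorm ip1 u"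
    and g_surj: "\<forall>x\<in>K. \<forall>y\<in>K. \<exists>u\<in>H1. g0 u = x \<and> g1 u = y"
    and ker_dense: "dense_wrt (ipnorm ip0) {u\<in>H1. g0 u = 0 \<and> g1 u = 0} UNIV"
    and DT_ker: "DT = {u\<in>H1. g0 u = 0 \<and> g1 u = 0}"
    and lagrange: "\<forall>u\<in>H1. \<forall>v\<in>H1.
        ip0 (Ts u) v - ip0 u (Ts v) = ipd (g1 u) (g0 v) - ipd (g0 u) (g1 v)"
    and G0_range: "\<forall>u\<in>Ds. G0 u \<in> antidual K (ipnorm ipK)"
    and G0_add: "\<forall>u\<in>Ds. \<forall>v\<in>Ds. G0 (u + v) = (\<lambda>x. G0 u x + G0 v x)"
    and G0_scale: "\<forall>a. \<forall>u\<in>Ds. G0 (cscale a u) = (\<lambda>x. a * G0 u x)"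
    and G0_bdd: "\<exists>C. \<forall>u\<in>Ds. \<forall>x\<in>K. cmod (G0 u x) \<le> C * graph_norm ip0 Ts u * ipnorm ipK x"
    and G0_ext: "\<forall>u\<in>H1. G0 u = emb_dual K ipd (g0 u)"
    and G1_range: "\<forall>u\<in>Ds. G1 u \<in> antidual K (ipnorm ipK)"
    and G1_add: "\<forall>u\<in>Ds. \<forall>v\<in>Ds. G1 (u + v) = (\<lambda>x. G1 u x + G1 v x)"
    and G1_scale: "\<forall>a. \<forall>u\<in>Ds. G1 (cscale a u) = (\<lambda>x. a * G1 u x)"
    and G1_bdd: "\<exists>C. \<forall>u\<in>Ds. \<forall>x\<in>K. cmod (G1 u x) \<le> C * graph_norm ip0 Ts u * ipnorm ipK x"
    and G1_ext: "\<forall>u\<in>H1. G1 u = emb_dual K ipd (g1 u)"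
    and A_sa: "selfadjoint_op ip0 DA A"
    and T_sub_A: "DT \<subseteq> DA" "\<forall>u\<in>DT. A u = T u"
    and A_sub_Ts: "DA \<subseteq> Ds" "\<forall>u\<in>DA. A u = Ts u"
    and DA_ker: "DA = {u\<in>H1. g0 u = 0}"
    and A_bij: "bij_betw A DA UNIV"
    and A_inv_bdd: "\<exists>C. \<forall>u\<in>DA. ipnorm ip0 u \<le> C * ipnorm ip0 (A u)"
  shows "\<forall>phi\<in>antidual K (ipnorm ipK). \<forall>x\<in>K. \<exists>u\<in>Ds.
           G0 u = phi \<and> reduced_Gamma1 Ds Ts G0 G1 u = emb_dual K ipd x"
proof -
  have ip0o: "inner_product_on UNIV ip0" and H0c: "complete_on UNIV (ipnorm ip0)"
    using H0_hilbert unfolding hilbert_on_def by auto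
  interpret H: hspace ip0 by (unfold_locales; fact ip0o H0c)
  interpret KD: ipspace UNIV ipd using Kd_hilbert unfolding hilbert_on_def by (unfold_locales) blast
  interpret KK: ipspace K ipK using K_hilbert unfolding hilbert_on_def by (unfold_locales) blast
  have Kc: "complete_on K (ipnorm ipK)" using K_hilbert unfolding hilbert_on_def by blast
  interpret H1S: ipspace H1 ip1 using H1_hilbert unfolding hilbert_on_def by (unfold_locales) blast
  have H1sub: "csubspace_on H1" by (rule H1S.sub)
  have uniq: "w = 0" if w: "\<forall>u\<in>DT. ip0 u w = 0" for w
  proof -
    have "cmod (ip0 w w) \<le> e * ipnorm ip0 w" if e: "e > 0" for e
    proof -
      obtain s where s: "s \<in> DT" "ipnorm ip0 (w - s) < e" using T_dense e unfolding dense_wrt_def by blast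
      have "ip0 w w = ip0 (w - s) w" using w s(1) by (simp add: H.diff_l)
      then have "cmod (ip0 w w) \<le> ipnorm ip0 (w - s) * ipnorm ip0 w" using H.cs by simp
      also have "\<dots> \<le> e * ipnorm ip0 w" using s(2) by (intro mult_right_mono) (auto simp: H.norm_nonneg)
      finally show ?thesis .
    qed
    then have "cmod (ip0 w w) \<le> 0" using small_le_zero[of "cmod (ip0 w w)" "ipnorm ip0 w"] H.norm_nonneg by blast
    then show ?thesis using H.def0 by simp
  qed
  have adjuniq: "w1 = w2" if "\<forall>u\<in>DT. ip0 (T u) v = ip0 u w1" "\<forall>u\<in>DT. ip0 (T u) v = ip0 u w2" for v w1 w2
  proof -
    have "\<forall>u\<in>DT. ip0 u (w1 - w2) = 0" using that by (simp add: H.diff_r)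
    then have "w1 - w2 = 0" by (rule uniq)
    then show ?thesis by simp
  qed
  have Ts_char: "\<forall>u\<in>DT. ip0 (T u) v = ip0 u (Ts v)" if v: "v \<in> Ds" for v
  proof -
    obtain w where w: "\<forall>u\<in>DT. ip0 (T u) v = ip0 u w" using v Ts_dom unfolding adj_dom_def by blast
    have "(THE w. \<forall>u\<in>DT. ip0 (T u) v = ip0 u w) = w"
      by (rule the_equality[where P="\<lambda>w. \<forall>u\<in>DT. ip0 (T u) v = ip0 u w", OF w]) (use adjuniq w in blast)
    then show ?thesis using w Ts_op v unfolding adj_op_def by simp
  qed
  have Ds_intro: "v \<in> Ds \<and> Ts v = w" if w: "\<forall>u\<in>DT. ip0 (T u) v = ip0 u w" for v w
  proof -
    have v: "v \<in> Ds" using w Ts_dom unfolding adj_dom_def by blast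
    then show ?thesis using adjuniq[OF Ts_char[OF v] w] by blast
  qed
  have Ds_diff: "v1 - v2 \<in> Ds \<and> Ts (v1 - v2) = Ts v1 - Ts v2" if "v1 \<in> Ds" "v2 \<in> Ds" for v1 v2
    using Ts_char[OF that(1)] Ts_char[OF that(2)] by (intro Ds_intro) (simp add: H.diff_r)
  have Ds_add: "v1 + v2 \<in> Ds" if "v1 \<in> Ds" "v2 \<in> Ds" for v1 v2
    using Ts_char[OF that(1)] Ts_char[OF that(2)] Ds_intro[of "v1 + v2" "Ts v1 + Ts v2"] by (simp add: H.add_r)
  have DAsub: "csubspace_on DA" and Alin: "clinear_on DA A" using A_sa unfolding selfadjoint_op_def by auto
  define Ai where "Ai = inv_into DA A"
  have AiDA: "Ai f \<in> DA" for f unfolding Ai_def using A_bij by (metis UNIV_I bij_betw_def inv_into_into)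
  have AAi: "A (Ai f) = f" for f unfolding Ai_def using A_bij by (metis UNIV_I bij_betw_def f_inv_into_f)
  have AiA: "Ai (A v) = v" if "v \<in> DA" for v unfolding Ai_def using A_bij that by (metis bij_betw_def inv_into_f_f)
  have Ainj: "x = y" if "x \<in> DA" "y \<in> DA" "A x = A y" for x y using A_bij that by (metis AiA)
  have Ai_add: "Ai (f + g) = Ai f + Ai g" for f g
    by (rule Ainj) (auto simp: AiDA csub_add[OF DAsub] clin_add[OF Alin] AAi)
  have Ai_sc: "Ai (cscale a f) = cscale a (Ai f)" for a f
    by (rule Ainj) (auto simp: AiDA csub_scale[OF DAsub] clin_scale[OF Alin] AAi)
  obtain CA where CA: "\<And>f. ipnorm ip0 (Ai f) \<le> CA * ipnorm ip0 f"
    using A_inv_bdd AiDA AAi by metis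
  have DA_H1: "DA \<subseteq> H1" and g0DA: "\<And>v. v \<in> DA \<Longrightarrow> g0 v = 0" using DA_ker by auto
  define B where "B f = g1 (Ai f)" for f
  have BK: "B f \<in> K" for f unfolding B_def using g1_range AiDA DA_H1 by blast
  have Badd: "B (f + g) = B f + B g" for f g unfolding B_def Ai_add using clin_add[OF g1_lin] AiDA DA_H1 by blast
  have Bsc: "B (cscale a f) = cscale a (B f)" for a f unfolding B_def Ai_sc using clin_scale[OF g1_lin] AiDA DA_H1 by blast
  have B0: "B 0 = 0" using Bsc[of 0 0] by simp
  have Bdiff: "B (x - y) = B x - B y" for x y
    using Badd[of x "-y"] Bsc[of "-1" y] by (simp add: cscale_m1)
  have pairing: "\<exists>Cy. \<forall>f. cmod (ipd y (B f)) \<le> Cy * ipnorm ip0 f" if y: "y \<in> K" for y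
  proof -
    obtain w where w: "w \<in> H1" "g0 w = y" using g_surj y by blast
    have form: "ipd y (B f) = ip0 w f - ip0 (Ts w) (Ai f)" for f
    proof -
      have v: "Ai f \<in> H1" "Ai f \<in> DA" using AiDA DA_H1 by auto
      have "ip0 (Ts w) (Ai f) - ip0 w (Ts (Ai f)) = ipd (g1 w) (g0 (Ai f)) - ipd (g0 w) (g1 (Ai f))"
        using lagrange w(1) v(1) by blast
      moreover have "Ts (Ai f) = f" using A_sub_Ts(2) v(2) AAi by metis
      moreover have "g0 (Ai f) = 0" using g0DA v(2) by blast
      ultimately have "ip0 (Ts w) (Ai f) - ip0 w f = - ipd y (g1 (Ai f))" using w(2) by simp
      then show ?thesis unfolding B_def by (simp add: algebra_simps)
    qed
    have "cmod (ipd y (B f)) \<le> (ipnorm ip0 w + ipnorm ip0 (Ts w) * CA) * ipnorm ip0 f" for f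
    proof -
      have "cmod (ipd y (B f)) \<le> cmod (ip0 w f) + cmod (ip0 (Ts w) (Ai f))" unfolding form by (rule norm_triangle_ineq4)
      also have "\<dots> \<le> ipnorm ip0 w * ipnorm ip0 f + ipnorm ip0 (Ts w) * (CA * ipnorm ip0 f)"
        using H.cs[of w f] H.cs[of "Ts w" "Ai f"] CA[of f]
        by (meson UNIV_I add_mono H.norm_nonneg mult_left_mono order_trans)
      finally show ?thesis by (simp add: algebra_simps)
    qed
    then show ?thesis by blast
  qed
  obtain Ci where Ci: "\<And>x. x \<in> K \<Longrightarrow> ipnorm ipd x \<le> Ci * ipnorm ipK x" using K_incl by blast
  have Bcl: "B f = z" if z: "z \<in> K" and sf: "(\<lambda>n. ipnorm ip0 (s n - f)) \<longlonglongrightarrow> 0"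
    and bz: "(\<lambda>n. ipnorm ipK (B (s n) - z)) \<longlonglongrightarrow> 0" for s f z
  proof -
    have orth: "ipd y (B f - z) = 0" if y: "y \<in> K" for y
    proof -
      obtain Cy where Cy: "\<And>f. cmod (ipd y (B f)) \<le> Cy * ipnorm ip0 f" using pairing[OF y] by blast
      have le: "cmod (ipd y (B f - z)) \<le> Cy * ipnorm ip0 (s n - f) + ipnorm ipd y * (Ci * ipnorm ipK (B (s n) - z))" for n
      proof -
        have "ipd y (B f - z) = - ipd y (B (s n - f)) + ipd y (B (s n) - z)"
          unfolding Bdiff by (simp add: KD.diff_r)
        then have "cmod (ipd y (B f - z)) \<le> cmod (ipd y (B (s n - f))) + cmod (ipd y (B (s n) - z))"
          by (metis norm_minus_cancel norm_triangle_ineq)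
        also have "\<dots> \<le> Cy * ipnorm ip0 (s n - f) + ipnorm ipd y * (Ci * ipnorm ipK (B (s n) - z))"
        proof (rule add_mono)
          show "cmod (ipd y (B (s n - f))) \<le> Cy * ipnorm ip0 (s n - f)" by (rule Cy)
          have "B (s n) - z \<in> K" using csub_diff[OF KK.sub BK z] .
          then show "cmod (ipd y (B (s n) - z)) \<le> ipnorm ipd y * (Ci * ipnorm ipK (B (s n) - z))"
            using KD.cs[of y "B (s n) - z"] Ci[of "B (s n) - z"]
            by (meson UNIV_I KD.norm_nonneg mult_left_mono order_trans)
        qed
        finally show ?thesis .
      qed
      have "(\<lambda>n. Cy * ipnorm ip0 (s n - f) + ipnorm ipd y * (Ci * ipnorm ipK (B (s n) - z))) \<longlonglongrightarrow>
            Cy * 0 + ipnorm ipd y * (Ci * 0)"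
        by (intro tendsto_intros sf bz)
      then have lim0: "(\<lambda>n. Cy * ipnorm ip0 (s n - f) + ipnorm ipd y * (Ci * ipnorm ipK (B (s n) - z))) \<longlonglongrightarrow> 0" by simp
      have "cmod (ipd y (B f - z)) \<le> 0" by (rule LIMSEQ_le_const[OF lim0]) (use le in blast)
      then show ?thesis by simp
    qed
    define x where "x = B f - z"
    have "cmod (ipd x x) \<le> e * ipnorm ipd x" if e: "e > 0" for e
    proof -
      obtain t where t: "t \<in> K" "ipnorm ipd (x - t) < e" using K_dense e unfolding dense_wrt_def by blast
      have "ipd x x = ipd (x - t) x" using orth[OF t(1)] unfolding x_def by (simp add: KD.diff_l)
      then have "cmod (ipd x x) \<le> ipnorm ipd (x - t) * ipnorm ipd x" using KD.cs by simp
      also have "\<dots> \<le> e * ipnorm ipd x" using t(2) by (intro mult_right_mono) (auto simp: KD.norm_nonneg)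
      finally show ?thesis .
    qed
    then have "cmod (ipd x x) \<le> 0" using small_le_zero[of "cmod (ipd x x)" "ipnorm ipd x"] KD.norm_nonneg by blast
    then have "x = 0" using KD.def0 by simp
    then show ?thesis unfolding x_def by simp
  qed
  obtain NB where NB: "\<And>f. ipnorm ipK (B f) \<le> NB * ipnorm ip0 f"
    using H.closed_graph[of K ipK B] KK.ipspace_axioms Kc BK Badd Bsc Bcl by blast
  show ?thesis
  proof (intro ballI)
    fix phi x assume phi: "phi \<in> antidual K (ipnorm ipK)" and x: "x \<in> K"
    have padd: "\<And>x y. x \<in> K \<Longrightarrow> y \<in> K \<Longrightarrow> phi (x + y) = phi x + phi y"
      and psc: "\<And>a x. x \<in> K \<Longrightarrow> phi (cscale a x) = cnj a * phi x"
      and pout: "\<And>x. x \<notin> K \<Longrightarrow> phi x = 0"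
      using phi unfolding antidual_def by auto
    obtain Cp where Cp: "\<And>x. x \<in> K \<Longrightarrow> cmod (phi x) \<le> Cp * ipnorm ipK x" using phi unfolding antidual_def by blast
    have lbd: "cmod (phi (B f)) \<le> (max Cp 0 * NB) * ipnorm ip0 f" for f
    proof -
      have "cmod (phi (B f)) \<le> Cp * ipnorm ipK (B f)" using Cp BK by blast
      also have "\<dots> \<le> max Cp 0 * ipnorm ipK (B f)" using KK.norm_nonneg[OF BK] by (intro mult_right_mono) auto
      also have "\<dots> \<le> max Cp 0 * (NB * ipnorm ip0 f)" using NB by (intro mult_left_mono) auto
      finally show ?thesis by simp
    qed
    obtain u where u: "\<And>f. phi (B f) = ip0 u f"
      using H.riesz[of "\<lambda>f. phi (B f)" "max Cp 0 * NB"] padd psc BK Badd Bsc lbd by metis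
    have phi0: "phi 0 = 0" using psc[of 0 0] csub_0[OF KK.sub] by simp
    have uDs: "u \<in> Ds \<and> Ts u = 0"
    proof (rule Ds_intro, intro ballI)
      fix z assume z: "z \<in> DT"
      have "B (T z) = 0" unfolding B_def using z T_sub_A AiA DT_ker phi0 by (metis (mono_tags, lifting) mem_Collect_eq subsetD)
      then have "ip0 u (T z) = 0" using u[of "T z"] phi0 by simp
      then show "ip0 (T z) u = ip0 z 0" using H.sym[of u "T z"] by simp
    qed
    obtain CG where CG: "\<And>w x. w \<in> Ds \<Longrightarrow> x \<in> K \<Longrightarrow> cmod (G0 w x) \<le> CG * graph_norm ip0 Ts w * ipnorm ipK x"
      using G0_bdd by blast
    define CG' where "CG' = max CG 0"
    have CG': "cmod (G0 w x) \<le> CG' * graph_norm ip0 Ts w * ipnorm ipK x" if "w \<in> Ds" "x \<in> K" for w x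
    proof -
      have "0 \<le> graph_norm ip0 Ts w * ipnorm ipK x" using KK.norm_nonneg[OF that(2)] graph_nonneg[of ip0 Ts w] by simp
      then have "CG * (graph_norm ip0 Ts w * ipnorm ipK x) \<le> CG' * (graph_norm ip0 Ts w * ipnorm ipK x)"
        unfolding CG'_def by (intro mult_right_mono) auto
      then show ?thesis using CG[OF that] by (simp add: mult.assoc)
    qed
    have CG'0: "0 \<le> CG'" unfolding CG'_def by simp
    have green: "ip0 u (A v) = G0 u (g1 v)" if v: "v \<in> DA" for v
    proof -
      have vH1: "v \<in> H1" using v DA_H1 by blast
      have g1vK: "g1 v \<in> K" using g1_range vH1 by blast
      define D where "D = ip0 u (A v) - G0 u (g1 v)"
      define Kc where "Kc = ipnorm ip0 (A v) + CG' * ipnorm ipK (g1 v) + ipnorm ip0 v"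
      have Kc0: "0 \<le> Kc" unfolding Kc_def using CG'0 KK.norm_nonneg[OF g1vK] H.norm_nonneg by simp
      have "cmod D \<le> e * Kc" if e: "e > 0" for e
      proof -
        obtain s where s: "s \<in> H1" "graph_norm ip0 Ts (u - s) < e"
          using H1_dense_graph uDs e unfolding dense_wrt_def by blast
        have sDs: "s \<in> Ds" using s(1) H1_sub by blast
        have us: "u - s \<in> Ds" "Ts (u - s) = - Ts s" using Ds_diff[OF conjunct1[OF uDs] sDs] uDs by auto
        have lag: "ip0 (Ts s) v - ip0 s (Ts v) = ipd (g1 s) (g0 v) - ipd (g0 s) (g1 v)"
          using lagrange s(1) vH1 by blast
        have Tsv: "Ts v = A v" using A_sub_Ts(2) v by metis
        have G0s: "G0 s (g1 v) = ipd (g0 s) (g1 v)" using G0_ext s(1) g1vK unfolding emb_dual_def by simp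
        have G0us: "G0 u (g1 v) = G0 (u - s) (g1 v) + G0 s (g1 v)"
          using G0_add us(1) sDs by (metis diff_add_cancel)
        have Deq: "D = ip0 (u - s) (A v) - G0 (u - s) (g1 v) - ip0 (Ts (u - s)) v"
          unfolding D_def G0us us(2) using lag Tsv G0s g0DA[OF v]
          by (simp add: H.diff_l H.minus_l algebra_simps)
        have t1: "cmod D \<le> cmod (ip0 (u - s) (A v) - G0 (u - s) (g1 v)) + cmod (ip0 (Ts (u - s)) v)"
          unfolding Deq by (rule norm_triangle_ineq4)
        have t2: "cmod (ip0 (u - s) (A v) - G0 (u - s) (g1 v)) \<le> cmod (ip0 (u - s) (A v)) + cmod (G0 (u - s) (g1 v))"
          by (rule norm_triangle_ineq4)
        have "cmod D \<le> cmod (ip0 (u - s) (A v)) + cmod (G0 (u - s) (g1 v)) + cmod (ip0 (Ts (u - s)) v)"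
          using t1 t2 by linarith
        also have "\<dots> \<le> e * ipnorm ip0 (A v) + CG' * e * ipnorm ipK (g1 v) + e * ipnorm ip0 v"
        proof (intro add_mono)
          have g: "graph_norm ip0 Ts (u - s) \<le> e" using s(2) by simp
          show "cmod (ip0 (u - s) (A v)) \<le> e * ipnorm ip0 (A v)"
            using H.cs[of "u - s" "A v"] graph_ge1[of ip0 "u - s" Ts] g
            by (meson UNIV_I H.norm_nonneg mult_right_mono order_trans)
          show "cmod (G0 (u - s) (g1 v)) \<le> CG' * e * ipnorm ipK (g1 v)"
            using CG'[OF us(1) g1vK] g CG'0 KK.norm_nonneg[OF g1vK]
            by (meson mult_left_mono mult_right_mono order_trans mult_nonneg_nonneg)
          show "cmod (ip0 (Ts (u - s)) v) \<le> e * ipnorm ip0 v"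
            using H.cs[of "Ts (u - s)" v] graph_ge2[of ip0 Ts "u - s"] g
            by (meson UNIV_I H.norm_nonneg mult_right_mono order_trans)
        qed
        also have "\<dots> = e * Kc" unfolding Kc_def by (simp add: algebra_simps)
        finally show ?thesis .
      qed
      then have "cmod D \<le> 0" using small_le_zero[OF _ Kc0] by blast
      then show ?thesis unfolding D_def by simp
    qed
    have G0u: "G0 u = phi"
    proof
      fix y
      show "G0 u y = phi y"
      proof (cases "y \<in> K")
        case True
        obtain v where v: "v \<in> H1" "g0 v = 0" "g1 v = y" using g_surj True csub_0[OF KK.sub] by blast
        have vDA: "v \<in> DA" using v DA_ker by blast
        have "phi y = phi (B (A v))" unfolding B_def AiA[OF vDA] v(3) ..
        also have "\<dots> = ip0 u (A v)" by (rule u)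
        also have "\<dots> = G0 u y" using green[OF vDA] v(3) by simp
        finally show ?thesis by simp
      next
        case False
        then show ?thesis using pout G0_range uDs unfolding antidual_def by auto
      qed
    qed
    define KerS where "KerS = {w\<in>Ds. Ts w = 0}"
    have phiim: "phi \<in> G0 ` KerS" unfolding KerS_def using uDs G0u by blast
    define w where "w = gamma_zero Ds Ts G0 phi"
    have w: "w \<in> KerS" "G0 w = phi" unfolding w_def gamma_zero_def KerS_def[symmetric]
      by (rule inv_into_into[OF phiim], rule f_inv_into_f[OF phiim])
    obtain v where v: "v \<in> H1" "g0 v = 0" "g1 v = x" using g_surj x csub_0[OF KK.sub] by blast
    have vDs: "v \<in> Ds" using v(1) H1_sub by blast
    have wDs: "w \<in> Ds" using w(1) unfolding KerS_def by blast
    have G0v: "G0 v = (\<lambda>y. 0)" using G0_ext v(1) v(2) unfolding emb_dual_def by auto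
    have G0wv: "G0 (w + v) = phi" using G0_add wDs vDs w(2) G0v by simp
    show "\<exists>u\<in>Ds. G0 u = phi \<and> reduced_Gamma1 Ds Ts G0 G1 u = emb_dual K ipd x"
    proof (intro bexI conjI)
      show "w + v \<in> Ds" using Ds_add wDs vDs .
      show "G0 (w + v) = phi" by (rule G0wv)
      show "reduced_Gamma1 Ds Ts G0 G1 (w + v) = emb_dual K ipd x"
        unfolding reduced_Gamma1_def weyl_zero_def G0wv w_def[symmetric]
        using G1_add wDs vDs G1_ext v(1) v(3) by simp
    qed
  qed
qed



end
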